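(* Let $(E,\varrho)$ be a Polish metric space and let $\alpha\in(0,1)$. Let $\mathcal{M}_+(E)$ be the set of nonnegative Borel measures $\mu$ on $E$ with $\mu(E)\le1$, endowed with the topology of weak convergence. For $t>0$ and $x\in E$ define $f_{t,x}:E\to[0,1]$ by $f_{t,x}(y)=1$ if $\varrho(x,y)\le 1/t$, $f_{t,x}(y)=-t\varrho(x,y)+2$ if $1/t\le\varrho(x,y)\le 2/t$, and $f_{t,x}(y)=0$ if $\varrho(x,y)\ge 2/t$; set $V_t(\mu,x)=\int f_{t,x}\,d\mu$ and, for $s\in\mathbb{N}$, $\beta^{\mathrm{H},\alpha}_\mu(x,s)=\sup_{t\ge s}t^\alpha V_t(\mu,x)$. For $r,s\in\mathbb{N}$ let $Z_\mu(r,s)=\{x\in E\mid \beta^{\mathrm{H},\alpha}_\mu(x,s)\le r\}$. Then for every $\delta>0$ and every $r,s\in\mathbb{N}$, the set \[ \mathcal{M}_{r,s}(\delta)=\{\mu\in\mathcal{M}_+(E)\mid \mu(Z_\mu(r,s))\ge\delta\} \] is a closed subset of $\mathcal{M}_+(E)$.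
   Context: Weak convergence: $\mu_n\to\mu$ iff $\int h\,d\mu_n\to\int h\,d\mu$ for every bounded continuous $h:E\to\mathbb{R}$. *)

theory Defs
  imports "HOL-Analysis.Analysis" "HOL-Probability.Probability"
begin

definition Mplus :: "('a::topological_space) measure set" where
  "Mplus = {\<mu>. sets \<mu> = sets borel \<and> emeasure \<mu> (space \<mu>) \<le> 1}"

definition weak_conv_topology :: "('a::topological_space) measure topology" where
  "weak_conv_topology = topology_generated_by
     {{\<mu> \<in> Mplus. integral\<^sup>L \<mu> h \<in> (U :: real set)} | h U.
        continuous_on UNIV h \<and> bounded (range h) \<and> open U}"

definition ftx :: "real \<Rightarrow> 'a::metric_space \<Rightarrow> 'a \<Rightarrow> real" where
  "ftx t x y = (if dist x y \<le> 1 / t then 1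
               else if dist x y \<le> 2 / t then - t * dist x y + 2 else 0)"

definition Vt :: "real \<Rightarrow> 'a::metric_space measure \<Rightarrow> 'a \<Rightarrow> real" where
  "Vt t \<mu> x = integral\<^sup>L \<mu> (ftx t x)"

definition betaH :: "real \<Rightarrow> 'a::metric_space measure \<Rightarrow> 'a \<Rightarrow> nat \<Rightarrow> ereal" where
  "betaH \<alpha> \<mu> x s = (SUP t\<in>{t. t > 0 \<and> t \<ge> real s}. ereal (t powr \<alpha> * Vt t \<mu> x))"

definition Zset :: "real \<Rightarrow> 'a::metric_space measure \<Rightarrow> nat \<Rightarrow> nat \<Rightarrow> 'a set" where
  "Zset \<alpha> \<mu> r s = {x. betaH \<alpha> \<mu> x s \<le> ereal (real r)}"

definition Mrs :: "real \<Rightarrow> nat \<Rightarrow> nat \<Rightarrow> real \<Rightarrow> 'a::metric_space measure set" where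
  "Mrs \<alpha> r s \<delta> = {\<mu> \<in> Mplus. emeasure \<mu> (Zset \<alpha> \<mu> r s) \<ge> ennreal \<delta>}"

end

theory Submission
  imports Defs
begin

lemma Mplus_space: "\<mu> \<in> Mplus \<Longrightarrow> space \<mu> = UNIV"
proof -
  assume "\<mu> \<in> Mplus"
  then have "sets \<mu> = sets borel" by (simp add: Mplus_def)
  then have "space \<mu> = space borel" by (rule sets_eq_imp_space_eq)
  then show ?thesis by simp
qed

lemma Mplus_finite: "\<mu> \<in> Mplus \<Longrightarrow> finite_measure \<mu>"
proof (rule finite_measureI)
  assume "\<mu> \<in> Mplus"
  then have "emeasure \<mu> (space \<mu>) \<le> 1" unfolding Mplus_def by auto
  then have "emeasure \<mu> (space \<mu>) < top" using ennreal_one_less_top by (rule le_less_trans)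
  then show "emeasure \<mu> (space \<mu>) \<noteq> \<infinity>" by simp
qed

lemma Mplus_sets: "\<mu> \<in> Mplus \<Longrightarrow> sets \<mu> = sets borel"
  unfolding Mplus_def by auto

lemma Mplus_le1: "\<mu> \<in> Mplus \<Longrightarrow> measure \<mu> UNIV \<le> 1"
proof -
  assume m: "\<mu> \<in> Mplus"
  then have "emeasure \<mu> UNIV \<le> 1" using Mplus_space[OF m] unfolding Mplus_def by auto
  moreover have "emeasure \<mu> UNIV = ennreal (measure \<mu> UNIV)"
    using finite_measure.emeasure_eq_measure[OF Mplus_finite[OF m]] .
  ultimately have "ennreal (measure \<mu> UNIV) \<le> ennreal 1" by simp
  then show ?thesis by (subst (asm) ennreal_le_iff) auto
qed

lemma Mplus_integrable:
  fixes h :: "'a::metric_space \<Rightarrow> real"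
  assumes m: "\<mu> \<in> Mplus" and c: "continuous_on UNIV h" and b: "\<And>x. \<bar>h x\<bar> \<le> B"
  shows "integrable \<mu> h"
proof -
  interpret finite_measure \<mu> by (rule Mplus_finite[OF m])
  have "h \<in> borel_measurable \<mu>"
    using borel_measurable_continuous_onI[OF c] measurable_cong_sets[OF Mplus_sets[OF m] refl] by blast
  moreover have "AE x in \<mu>. norm (h x) \<le> B" using b by (intro AE_I2) simp
  ultimately show ?thesis by (rule integrable_const_bound[rotated])
qed

lemma ftx_alt: "t > 0 \<Longrightarrow> ftx t x y = max 0 (min 1 (2 - t * dist x y))"
proof -
  assume t: "t > 0"
  have a: "dist x y \<le> 1 / t \<longleftrightarrow> t * dist x y \<le> 1" using t by (simp add: field_simps)
  have b: "dist x y \<le> 2 / t \<longleftrightarrow> t * dist x y \<le> 2" using t by (simp add: field_simps)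
  show ?thesis unfolding ftx_def using a b by auto
qed

lemma ftx_cont: "t > 0 \<Longrightarrow> continuous_on UNIV (ftx t x)"
proof -
  assume t: "t > 0"
  have "ftx t x = (\<lambda>y. max 0 (min 1 (2 - t * dist x y)))" using ftx_alt[OF t] by auto
  then show ?thesis by (simp only:) (intro continuous_intros)
qed

lemma ftx_bound: "t > 0 \<Longrightarrow> \<bar>ftx t x y\<bar> \<le> 1"
  by (simp add: ftx_alt)

lemma ftx_lip: "t > 0 \<Longrightarrow> \<bar>ftx t x z - ftx t y z\<bar> \<le> t * dist x y"
proof -
  assume t: "t > 0"
  have "\<bar>dist x z - dist y z\<bar> \<le> dist x y"
    by (metis abs_le_iff diff_le_eq dist_commute dist_triangle dist_triangle2 minus_diff_eq add.commute)
  then have 1: "\<bar>t * dist x z - t * dist y z\<bar> \<le> t * dist x y"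
    using t by (metis abs_mult abs_of_pos mult_left_mono right_diff_distrib less_imp_le)
  have 2: "\<bar>max 0 (min 1 a) - max 0 (min 1 b)\<bar> \<le> \<bar>a - b\<bar>" for a b :: real
    by (simp add: max_def min_def abs_if)
  have "\<bar>ftx t x z - ftx t y z\<bar> \<le> \<bar>(2 - t * dist x z) - (2 - t * dist y z)\<bar>"
    unfolding ftx_alt[OF t] by (rule 2)
  also have "\<dots> = \<bar>t * dist x z - t * dist y z\<bar>" by simp
  finally show ?thesis using 1 by linarith
qed

lemma Vt_lip:
  fixes x y :: "'a::metric_space"
  assumes m: "\<mu> \<in> Mplus" and t: "t > 0"
  shows "\<bar>Vt t \<mu> x - Vt t \<mu> y\<bar> \<le> t * dist x y"
proof -
  have i1: "integrable \<mu> (ftx t x)" "integrable \<mu> (ftx t y)"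
    using Mplus_integrable[OF m ftx_cont[OF t] ftx_bound[OF t]] by auto
  have "\<bar>Vt t \<mu> x - Vt t \<mu> y\<bar> = \<bar>integral\<^sup>L \<mu> (\<lambda>z. ftx t x z - ftx t y z)\<bar>"
    unfolding Vt_def using i1 by simp
  also have "\<dots> \<le> integral\<^sup>L \<mu> (\<lambda>z. \<bar>ftx t x z - ftx t y z\<bar>)"
    using integral_norm_bound[of \<mu> "\<lambda>z. ftx t x z - ftx t y z"] by simp
  also have "\<dots> \<le> integral\<^sup>L \<mu> (\<lambda>z. t * dist x y)"
    using i1 ftx_lip[OF t] finite_measure.integrable_const[OF Mplus_finite[OF m]]
    by (intro integral_mono) auto
  also have "\<dots> = t * dist x y * measure \<mu> UNIV" using Mplus_space[OF m] by simp
  also have "\<dots> \<le> t * dist x y" using Mplus_le1[OF m] t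
    by (metis mult_left_le mult_nonneg_nonneg less_imp_le zero_le_dist)
  finally show ?thesis .
qed


lemma topspace_wct: "topspace (weak_conv_topology :: 'a::topological_space measure topology) = Mplus"
proof -
  have "\<mu> \<in> \<Union>{{\<mu> \<in> Mplus. integral\<^sup>L \<mu> h \<in> (U :: real set)} | h U.
        continuous_on UNIV h \<and> bounded (range h) \<and> open U}" if "\<mu> \<in> Mplus" for \<mu> :: "'a measure"
  proof (rule UnionI)
    show "{\<nu> \<in> Mplus. integral\<^sup>L \<nu> (\<lambda>_. 0::real) \<in> UNIV} \<in> {{\<mu> \<in> Mplus. integral\<^sup>L \<mu> h \<in> (U :: real set)} | h U.
        continuous_on UNIV h \<and> bounded (range h) \<and> open U}"
      by (intro CollectI exI[of _ "\<lambda>_. 0::real"] exI[of _ UNIV]) auto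
  qed (use that in auto)
  then show ?thesis unfolding weak_conv_topology_def topology_generated_by_topspace by blast
qed

lemma open_wct:
  fixes h :: "'a::topological_space \<Rightarrow> real"
  assumes "continuous_on UNIV h" "bounded (range h)" "open U"
  shows "openin weak_conv_topology {\<mu> \<in> Mplus. integral\<^sup>L \<mu> h \<in> U}"
  unfolding weak_conv_topology_def openin_topology_generated_by_iff
  by (rule generate_topology_on.Basis) (use assms in blast)

lemma beta_ge:
  assumes "t > 0" "t \<ge> real s"
  shows "ereal (t powr \<alpha> * Vt t \<mu> y) \<le> betaH \<alpha> \<mu> y s"
  unfolding betaH_def by (rule SUP_upper) (use assms in auto)

lemma notZ_excl:
  assumes "t > 0" "t \<ge> real s" "real r < t powr \<alpha> * Vt t \<mu> y"
  shows "y \<notin> Zset \<alpha> \<mu> r s"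
proof
  assume "y \<in> Zset \<alpha> \<mu> r s"
  then have "betaH \<alpha> \<mu> y s \<le> ereal (real r)" by (simp add: Zset_def)
  with beta_ge[OF assms(1,2), of \<alpha> \<mu> y] have "ereal (t powr \<alpha> * Vt t \<mu> y) \<le> ereal (real r)"
    by (rule order_trans)
  then have "t powr \<alpha> * Vt t \<mu> y \<le> real r" by simp
  with assms(3) show False by simp
qed

lemma notZ:
  assumes "y \<notin> Zset \<alpha> \<mu> r s"
  shows "\<exists>t>0. t \<ge> real s \<and> real r < t powr \<alpha> * Vt t \<mu> y"
proof -
  have "ereal (real r) < betaH \<alpha> \<mu> y s" using assms by (simp add: Zset_def not_le)
  then obtain t where "t \<in> {t. t > 0 \<and> t \<ge> real s}" "ereal (real r) < ereal (t powr \<alpha> * Vt t \<mu> y)"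
    unfolding betaH_def less_SUP_iff by blast
  then show ?thesis by auto
qed

lemma excl:
  fixes x y :: "'a::metric_space"
  assumes m: "\<mu> \<in> Mplus" and t: "t > 0" "t \<ge> real s"
    and g: "g = t powr \<alpha> * Vt t \<mu>0 x - real r" "g > 0"
    and v: "\<bar>Vt t \<mu> x - Vt t \<mu>0 x\<bar> < g / (4 * t powr \<alpha>)"
    and d: "dist x y < g / (2 * t powr \<alpha> * t)"
  shows "y \<notin> Zset \<alpha> \<mu> r s"
proof (rule notZ_excl[OF t])
  define a where "a = t powr \<alpha>"
  have a: "a > 0" using t by (simp add: a_def)
  have l: "\<bar>Vt t \<mu> x - Vt t \<mu> y\<bar> \<le> t * dist x y" by (rule Vt_lip[OF m t(1)])
  have 1: "a * \<bar>Vt t \<mu> x - Vt t \<mu>0 x\<bar> < g / 4" using v a by (simp add: a_def field_simps)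
  have 2: "a * (t * dist x y) < g / 2" using d a t by (simp add: a_def field_simps)
  have 3: "a * \<bar>Vt t \<mu> x - Vt t \<mu> y\<bar> \<le> a * (t * dist x y)" using l a by simp
  have "a * Vt t \<mu> y = a * Vt t \<mu>0 x + a * (Vt t \<mu> x - Vt t \<mu>0 x) - a * (Vt t \<mu> x - Vt t \<mu> y)"
    by (simp add: algebra_simps)
  moreover have "a * (- \<bar>Vt t \<mu> x - Vt t \<mu>0 x\<bar>) \<le> a * (Vt t \<mu> x - Vt t \<mu>0 x)"
    using a by (intro mult_left_mono) auto
  moreover have "a * (Vt t \<mu> x - Vt t \<mu> y) \<le> a * \<bar>Vt t \<mu> x - Vt t \<mu> y\<bar>"
    using a by (intro mult_left_mono) auto
  ultimately have "a * Vt t \<mu> y > a * Vt t \<mu>0 x - 3 * g / 4" using 1 2 3 by linarith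
  then show "real r < t powr \<alpha> * Vt t \<mu> y" using g unfolding a_def by linarith
qed

lemma Z_closed:
  fixes \<mu> :: "'a::metric_space measure"
  assumes m: "\<mu> \<in> Mplus"
  shows "closed (Zset \<alpha> \<mu> r s)"
  unfolding closed_def open_dist
proof (intro ballI)
  fix y assume "y \<in> - Zset \<alpha> \<mu> r s"
  then obtain t where t: "t > 0" "t \<ge> real s" "real r < t powr \<alpha> * Vt t \<mu> y"
    using notZ by blast
  define g where "g = t powr \<alpha> * Vt t \<mu> y - real r"
  have g: "g > 0" using t by (simp add: g_def)
  show "\<exists>e>0. \<forall>z. dist z y < e \<longrightarrow> z \<in> - Zset \<alpha> \<mu> r s"
  proof (intro exI[of _ "g / (2 * t powr \<alpha> * t)"] conjI allI impI)
    show "g / (2 * t powr \<alpha> * t) > 0" using g t by simp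
    fix z assume "dist z y < g / (2 * t powr \<alpha> * t)"
    then have "dist y z < g / (2 * t powr \<alpha> * t)" by (simp add: dist_commute)
    have "z \<notin> Zset \<alpha> \<mu> r s"
      by (rule excl[OF m t(1,2) g_def g]) (use g t \<open>dist y z < _\<close> in auto)
    then show "z \<in> - Zset \<alpha> \<mu> r s" by simp
  qed
qed


theorem lemma3p2:
  fixes \<alpha> \<delta> :: real and r s :: nat
  assumes "0 < \<alpha>" "\<alpha> < 1" "\<delta> > 0" "r \<ge> 1" "s \<ge> 1"
  shows "closedin (weak_conv_topology :: ('a::polish_space) measure topology) (Mrs \<alpha> r s \<delta>)"
proof -
  let ?T = "weak_conv_topology :: 'a measure topology"
  have "openin ?T (Mplus - Mrs \<alpha> r s \<delta>)"
  proof (subst openin_subopen, intro ballI)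
    fix \<mu>0 :: "'a measure" assume "\<mu>0 \<in> Mplus - Mrs \<alpha> r s \<delta>"
    then have m0: "\<mu>0 \<in> Mplus" and lt: "emeasure \<mu>0 (Zset \<alpha> \<mu>0 r s) < ennreal \<delta>"
      by (auto simp: Mrs_def not_le)
    interpret F0: finite_measure \<mu>0 by (rule Mplus_finite[OF m0])
    have sp0: "space \<mu>0 = UNIV" by (rule Mplus_space[OF m0])
    have se0: "sets \<mu>0 = sets borel" by (rule Mplus_sets[OF m0])
    define Z0 where "Z0 = Zset \<alpha> \<mu>0 r s"
    have Z0b: "Z0 \<in> sets borel" unfolding Z0_def using Z_closed[OF m0] by auto
    have m0lt: "measure \<mu>0 Z0 < \<delta>"
      using lt unfolding Z0_def[symmetric] F0.emeasure_eq_measure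
      by (simp add: ennreal_less_iff)
    define \<eta> where "\<eta> = (\<delta> - measure \<mu>0 Z0) / 4"
    have \<eta>: "\<eta> > 0" using m0lt by (simp add: \<eta>_def)
    have fin: "emeasure \<mu>0 (space \<mu>0) \<noteq> \<infinity>" by simp
    obtain K where K: "compact K" "measure \<mu>0 (UNIV - K) < \<eta>"
    proof (cases "measure \<mu>0 UNIV < \<eta>")
      case True
      then show ?thesis using that[of "{}"] by auto
    next
      case False
      have "ennreal (measure \<mu>0 UNIV - \<eta>) < ennreal (measure \<mu>0 UNIV)"
        using False \<eta> by (subst ennreal_less_iff) auto
      also have "\<dots> = emeasure \<mu>0 UNIV" by (simp add: F0.emeasure_eq_measure)
      also have "\<dots> = (SUP K \<in> {K. K \<subseteq> UNIV \<and> compact K}. emeasure \<mu>0 K)"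
        by (rule inner_regular[OF se0 fin]) simp
      finally obtain K where "compact K" "ennreal (measure \<mu>0 UNIV - \<eta>) < emeasure \<mu>0 K"
        unfolding less_SUP_iff by blast
      then have "measure \<mu>0 UNIV - \<eta> < measure \<mu>0 K"
        using False by (simp add: F0.emeasure_eq_measure ennreal_less_iff)
      moreover have "measure \<mu>0 (UNIV - K) = measure \<mu>0 UNIV - measure \<mu>0 K"
        using \<open>compact K\<close> se0 sp0 by (intro F0.finite_measure_Diff) (auto intro: borel_closed compact_imp_closed)
      ultimately show ?thesis using that \<open>compact K\<close> by auto
    qed
    obtain G where G: "open G" "Z0 \<subseteq> G" "measure \<mu>0 G < measure \<mu>0 Z0 + \<eta>"
    proof -
      have "(INF U \<in> {U. Z0 \<subseteq> U \<and> open U}. emeasure \<mu>0 U) = emeasure \<mu>0 Z0"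
        by (rule outer_regular[OF se0 fin Z0b, symmetric])
      also have "\<dots> < ennreal (measure \<mu>0 Z0 + \<eta>)"
        using \<eta> by (simp add: F0.emeasure_eq_measure ennreal_less_iff)
      finally obtain U where "Z0 \<subseteq> U" "open U" "emeasure \<mu>0 U < ennreal (measure \<mu>0 Z0 + \<eta>)"
        unfolding INF_less_iff by blast
      moreover from this(3) have "ennreal (measure \<mu>0 U) < ennreal (measure \<mu>0 Z0 + \<eta>)"
        by (simp only: F0.emeasure_eq_measure)
      then have "measure \<mu>0 U < measure \<mu>0 Z0 + \<eta>"
        by (subst (asm) ennreal_less_iff) auto
      ultimately show ?thesis using that by blast
    qed
    define C where "C = K - G"
    have Cc: "compact C" unfolding C_def using K G by (intro compact_diff) auto
    have "\<forall>x\<in>C. \<exists>t>0. t \<ge> real s \<and> real r < t powr \<alpha> * Vt t \<mu>0 x"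
    proof
      fix x assume "x \<in> C"
      then have "x \<notin> Zset \<alpha> \<mu>0 r s" using G unfolding C_def Z0_def by auto
      then show "\<exists>t>0. t \<ge> real s \<and> real r < t powr \<alpha> * Vt t \<mu>0 x" by (rule notZ)
    qed
    then obtain T where T: "\<And>x. x \<in> C \<Longrightarrow> T x > 0 \<and> T x \<ge> real s \<and> real r < T x powr \<alpha> * Vt (T x) \<mu>0 x"
      by metis
    define g where "g x = T x powr \<alpha> * Vt (T x) \<mu>0 x - real r" for x
    define \<rho> where "\<rho> x = g x / (4 * T x powr \<alpha> * T x)" for x
    have gpos: "g x > 0" if "x \<in> C" for x using T[OF that] by (simp add: g_def)
    have \<rho>pos: "\<rho> x > 0" if "x \<in> C" for x using T[OF that] gpos[OF that] by (simp add: \<rho>_def)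
    have "C \<subseteq> (\<Union>x\<in>C. ball x (\<rho> x))" using \<rho>pos by auto
    then obtain X where X: "X \<subseteq> C" "finite X" "C \<subseteq> (\<Union>x\<in>X. ball x (\<rho> x))"
      using compactE_image[OF Cc, of C "\<lambda>x. ball x (\<rho> x)"] by auto
    define N where "N = (\<Union>x\<in>X. ball x (2 * \<rho> x))"
    have Nopen: "open N" unfolding N_def by auto
    define e where "e = (if X = {} then 1 else Min (\<rho> ` X))"
    have epos: "e > 0" unfolding e_def using X \<rho>pos by auto
    have ele: "e \<le> \<rho> x" if "x \<in> X" for x unfolding e_def using X that by auto
    define \<phi> where "\<phi> y = (if C = {} then 1 else min 1 (infdist y C / e))" for y
    have \<phi>c: "continuous_on UNIV \<phi>"
    proof (cases "C = {}")
      case True then show ?thesis unfolding \<phi>_def by simp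
    next
      case False
      then have "\<phi> = (\<lambda>y. min 1 (infdist y C / e))" unfolding \<phi>_def by auto
      then show ?thesis using epos by (simp only:) (intro continuous_intros, auto)
    qed
    have \<phi>01: "0 \<le> \<phi> y \<and> \<phi> y \<le> 1" for y
      unfolding \<phi>_def using infdist_nonneg[of y C] epos by auto
    have \<phi>b: "bounded (range \<phi>)"
      unfolding bounded_iff using \<phi>01 by (intro exI[of _ 1]) auto
    have \<phi>abs: "\<bar>\<phi> y\<bar> \<le> 1" for y using \<phi>01[of y] by auto
    have \<phi>N: "\<phi> y = 1" if "y \<notin> N" for y
    proof (cases "C = {}")
      case True then show ?thesis by (simp add: \<phi>_def)
    next
      case False
      have "infdist y C \<ge> e"
      proof (rule ccontr)
        assume "\<not> infdist y C \<ge> e"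
        then have "(INF a\<in>C. dist y a) < e" using False by (simp add: infdist_notempty)
        then obtain c where c: "c \<in> C" "dist y c < e" using False by (auto simp: cINF_less_iff)
        then obtain x where x: "x \<in> X" "c \<in> ball x (\<rho> x)" using X by auto
        have "dist x y \<le> dist x c + dist c y" by (rule dist_triangle)
        then have "dist x y < 2 * \<rho> x" using x c ele[OF x(1)] by (simp add: dist_commute)
        then have "y \<in> N" unfolding N_def using x by auto
        then show False using that by simp
      qed
      then show ?thesis using False epos by (simp add: \<phi>_def)
    qed
    have \<phi>C: "\<phi> y = 0" if "y \<in> C" for y using that by (auto simp: \<phi>_def)
    have int\<phi>: "integrable \<mu> \<phi>" if "\<mu> \<in> Mplus" for \<mu> :: "'a measure"
      by (rule Mplus_integrable[OF that \<phi>c \<phi>abs])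
    have Nbound: "measure \<mu> (- N) \<le> integral\<^sup>L \<mu> \<phi>" if m: "\<mu> \<in> Mplus" for \<mu> :: "'a measure"
    proof -
      have "measure \<mu> (- N) = integral\<^sup>L \<mu> (indicator (- N))" using Mplus_space[OF m] by simp
      also have "\<dots> \<le> integral\<^sup>L \<mu> \<phi>"
        by (rule integral_mono'[OF int\<phi>[OF m]]) (use \<phi>N \<phi>01 in \<open>auto simp: indicator_def\<close>)
      finally show ?thesis .
    qed
    have Cb: "- C \<in> sets \<mu>0" using Cc se0 by (auto intro: borel_open compact_imp_closed)
    have intC: "integrable \<mu>0 (indicator (- C) :: 'a \<Rightarrow> real)"
      using Cb sp0 by (simp add: integrable_indicator_iff less_top[symmetric])
    have "integral\<^sup>L \<mu>0 \<phi> \<le> integral\<^sup>L \<mu>0 (indicator (- C))"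
      by (rule integral_mono'[where f="indicator (- C)"])
         (use Cb \<phi>C \<phi>01 intC in \<open>auto simp: indicator_def\<close>)
    also have "\<dots> = measure \<mu>0 (- C)" using sp0 by simp
    also have "\<dots> \<le> measure \<mu>0 ((UNIV - K) \<union> G)"
      using K G se0 by (intro F0.finite_measure_mono) (auto simp: C_def intro: borel_open borel_closed compact_imp_closed)
    also have "\<dots> \<le> measure \<mu>0 (UNIV - K) + measure \<mu>0 G"
      using K G se0 by (intro measure_subadditive) (auto intro: borel_open borel_closed compact_imp_closed)
    finally have \<phi>0: "integral\<^sup>L \<mu>0 \<phi> < measure \<mu>0 Z0 + 2 * \<eta>" using K G by linarith
    define A where "A = {\<mu> \<in> Mplus. integral\<^sup>L \<mu> \<phi> \<in> {..< integral\<^sup>L \<mu>0 \<phi> + \<eta>}}"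
    define B where "B x = {\<mu> \<in> Mplus. integral\<^sup>L \<mu> (ftx (T x) x) \<in> ball (Vt (T x) \<mu>0 x) (g x / (4 * T x powr \<alpha>))}" for x
    define W where "W = A \<inter> ((\<Inter>x\<in>X. B x) \<inter> topspace ?T)"
    show "\<exists>W. openin ?T W \<and> \<mu>0 \<in> W \<and> W \<subseteq> Mplus - Mrs \<alpha> r s \<delta>"
    proof (intro exI[of _ W] conjI)
      have "openin ?T A" unfolding A_def by (rule open_wct[OF \<phi>c \<phi>b]) auto
      moreover have "openin ?T ((\<Inter>x\<in>X. B x) \<inter> topspace ?T)"
      proof (rule openin_INT[OF X(2)])
        fix x assume x: "x \<in> X"
        then have tx: "T x > 0" using T X by auto
        have "bounded (range (ftx (T x) x))"
          unfolding bounded_iff using ftx_bound[OF tx] by (intro exI[of _ 1]) auto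
        then show "openin ?T (B x)" unfolding B_def
          by (intro open_wct[OF ftx_cont[OF tx]]) auto
      qed
      ultimately show "openin ?T W" unfolding W_def by (rule openin_Int)
      show "\<mu>0 \<in> W"
      proof -
        have "0 < g x / (4 * T x powr \<alpha>)" if "x \<in> X" for x
          using gpos[of x] T[of x] X that by auto
        then show ?thesis
          unfolding W_def A_def B_def topspace_wct using m0 \<eta> by (auto simp: Vt_def)
      qed
      show "W \<subseteq> Mplus - Mrs \<alpha> r s \<delta>"
      proof
        fix \<mu> :: "'a measure" assume "\<mu> \<in> W"
        then have m: "\<mu> \<in> Mplus" and iA: "integral\<^sup>L \<mu> \<phi> < integral\<^sup>L \<mu>0 \<phi> + \<eta>"
          and iB: "\<And>x. x \<in> X \<Longrightarrow> \<bar>Vt (T x) \<mu> x - Vt (T x) \<mu>0 x\<bar> < g x / (4 * T x powr \<alpha>)"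
          unfolding W_def A_def B_def by (auto simp: Vt_def dist_real_def abs_minus_commute)
        interpret F: finite_measure \<mu> by (rule Mplus_finite[OF m])
        have "Zset \<alpha> \<mu> r s \<subseteq> - N"
        proof
          fix y assume yZ: "y \<in> Zset \<alpha> \<mu> r s"
          show "y \<in> - N"
          proof
            assume "y \<in> N"
            then obtain x where x: "x \<in> X" "dist x y < 2 * \<rho> x" unfolding N_def by auto
            have xC: "x \<in> C" using x X by auto
            have "dist x y < g x / (2 * T x powr \<alpha> * T x)"
            proof -
              have "2 * \<rho> x = g x / (2 * T x powr \<alpha> * T x)" unfolding \<rho>_def by simp
              then show ?thesis using x(2) by linarith
            qed
            then have "y \<notin> Zset \<alpha> \<mu> r s"
              using excl[OF m _ _ g_def gpos[OF xC] iB[OF x(1)]] T[OF xC] by auto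
            then show False using yZ by simp
          qed
        qed
        then have "emeasure \<mu> (Zset \<alpha> \<mu> r s) \<le> emeasure \<mu> (- N)"
          using Nopen Mplus_sets[OF m] by (intro emeasure_mono) (auto intro: borel_closed)
        also have "\<dots> = ennreal (measure \<mu> (- N))" by (simp add: F.emeasure_eq_measure)
        also have "\<dots> < ennreal \<delta>"
        proof -
          have e4: "4 * \<eta> = \<delta> - measure \<mu>0 Z0" unfolding \<eta>_def by simp
          have "measure \<mu> (- N) < \<delta>" using Nbound[OF m] iA \<phi>0 m0lt \<eta> e4 by linarith
          then show ?thesis by (simp add: ennreal_less_iff)
        qed
        finally have "\<not> emeasure \<mu> (Zset \<alpha> \<mu> r s) \<ge> ennreal \<delta>" by simp
        then show "\<mu> \<in> Mplus - Mrs \<alpha> r s \<delta>" using m by (simp add: Mrs_def)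
      qed
    qed
  qed
  moreover have "Mrs \<alpha> r s \<delta> \<subseteq> Mplus" by (auto simp: Mrs_def)
  ultimately show ?thesis unfolding closedin_def topspace_wct by simp
qed

end
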